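(* Consider a discounted Markov decision process with finite state space $\mathcal S$, finite action space $\mathcal A$, transition probabilities $\mathcal P(s'\mid s,a)$, reward function $R:\mathcal S\times\mathcal A\to[0,1]$, discount factor $\gamma\in[0,1)$ and initial state distribution $p$. For a policy $\pi\in\mathcal X:=\Delta(\mathcal A)^{|\mathcal S|}$ (viewed as a matrix $(\pi_{sa})\in\mathbb R^{|\mathcal S|\times|\mathcal A|}$ whose rows $\pi_s$ are probability vectors), let $V_p(\pi):=-\mathbb E\big[\sum_{h=0}^\infty\gamma^hR(s_h,a_h)\big]$, where $s_0\sim p$, $a_h\sim\pi_{s_h}$, $s_{h+1}\sim\mathcal P(\cdot\mid s_h,a_h)$. Then for any $\pi,\pi'\in\mathcal X$, $$\|\nabla V_p(\pi)-\nabla V_p(\pi')\|_{2,\infty}\le\frac{2\gamma}{(1-\gamma)^3}\|\pi-\pi'\|_{2,1}.$$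
   Context: For a matrix $M\in\mathbb R^{|\mathcal S|\times|\mathcal A|}$: $\|M\|_{2,1}^2:=\sum_{s\in\mathcal S}\big(\sum_{a\in\mathcal A}|M_{sa}|\big)^2$ and $\|M\|_{2,\infty}^2:=\sum_{s\in\mathcal S}\big(\max_{a\in\mathcal A}|M_{sa}|\big)^2$. $\Delta(\mathcal A)$ is the probability simplex on $\mathcal A$; $\nabla V_p(\pi)$ is the gradient with respect to the entries $\pi_{sa}$. *)

theory Defs
  imports "HOL-Analysis.Analysis"
begin

text \<open>Transition kernel P s a s' = P(s' | s, a), reward R s a, initial distribution p.
  A policy (or, more generally, a real |S| x |A| matrix) is pol :: 's => 'a => real.\<close>

definition is_distribution :: "('b::finite \<Rightarrow> real) \<Rightarrow> bool" where
  "is_distribution q \<longleftrightarrow> (\<forall>x. q x \<ge> 0) \<and> (\<Sum>x\<in>UNIV. q x) = 1"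

definition is_policy :: "('s::finite \<Rightarrow> 'a::finite \<Rightarrow> real) \<Rightarrow> bool" where
  "is_policy pol \<longleftrightarrow> (\<forall>s. is_distribution (pol s))"

primrec state_dist ::
  "('s::finite \<Rightarrow> 'a::finite \<Rightarrow> 's \<Rightarrow> real) \<Rightarrow> ('s \<Rightarrow> 'a \<Rightarrow> real) \<Rightarrow> ('s \<Rightarrow> real) \<Rightarrow> nat \<Rightarrow> 's \<Rightarrow> real" where
  "state_dist P pol p 0 = p"
| "state_dist P pol p (Suc h) =
     (\<lambda>s'. \<Sum>s\<in>UNIV. \<Sum>a\<in>UNIV. state_dist P pol p h s * pol s a * P s a s')"

text \<open>V_p(pol) = - E[ sum_h gamma^h R(s_h,a_h) ] = - sum_h gamma^h sum_{s,a} Pr(s_h=s) pol(s,a) R(s,a).\<close>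
definition V ::
  "('s::finite \<Rightarrow> 'a::finite \<Rightarrow> 's \<Rightarrow> real) \<Rightarrow> ('s \<Rightarrow> 'a \<Rightarrow> real) \<Rightarrow> real \<Rightarrow> ('s \<Rightarrow> real)
    \<Rightarrow> ('s \<Rightarrow> 'a \<Rightarrow> real) \<Rightarrow> real" where
  "V P R \<gamma> p pol =
     - (\<Sum>h. \<gamma> ^ h * (\<Sum>s\<in>UNIV. \<Sum>a\<in>UNIV. state_dist P pol p h s * pol s a * R s a))"

definition gradV ::
  "('s::finite \<Rightarrow> 'a::finite \<Rightarrow> 's \<Rightarrow> real) \<Rightarrow> ('s \<Rightarrow> 'a \<Rightarrow> real) \<Rightarrow> real \<Rightarrow> ('s \<Rightarrow> real)
    \<Rightarrow> ('s \<Rightarrow> 'a \<Rightarrow> real) \<Rightarrow> 's \<Rightarrow> 'a \<Rightarrow> real" where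
  "gradV P R \<gamma> p pol s a =
     deriv (\<lambda>t. V P R \<gamma> p (pol(s := (pol s)(a := pol s a + t)))) 0"

definition norm21 :: "('s::finite \<Rightarrow> 'a::finite \<Rightarrow> real) \<Rightarrow> real" where
  "norm21 M = sqrt (\<Sum>s\<in>UNIV. (\<Sum>a\<in>UNIV. \<bar>M s a\<bar>)\<^sup>2)"

definition norm2inf :: "('s::finite \<Rightarrow> 'a::finite \<Rightarrow> real) \<Rightarrow> real" where
  "norm2inf M = sqrt (\<Sum>s\<in>UNIV. (Max (range (\<lambda>a. \<bar>M s a\<bar>)))\<^sup>2)"

end

theory Submission imports Defs begin

definition Mx :: "('s::finite \<Rightarrow> 'a::finite \<Rightarrow> 's \<Rightarrow> real) \<Rightarrow> ('s \<Rightarrow> 'a \<Rightarrow> real) \<Rightarrow> 's \<Rightarrow> 's \<Rightarrow> real" where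
  "Mx P x s1 s' = (\<Sum>a\<in>UNIV. x s1 a * P s1 a s')"

definition occ :: "('s::finite \<Rightarrow> 'a::finite \<Rightarrow> 's \<Rightarrow> real) \<Rightarrow> ('s \<Rightarrow> 'a \<Rightarrow> real) \<Rightarrow> ('s \<Rightarrow> real) \<Rightarrow> real \<Rightarrow> 's \<Rightarrow> real" where
  "occ P x q g s' = (\<Sum>h. g ^ h * state_dist P x q h s')"

lemma sd_Suc: "state_dist P x q (Suc h) s' = (\<Sum>s1\<in>UNIV. state_dist P x q h s1 * Mx P x s1 s')"
  by (simp add: Mx_def sum_distrib_left mult.assoc)

lemma core:
  fixes P :: "'s::finite \<Rightarrow> 'a::finite \<Rightarrow> 's \<Rightarrow> real"
  assumes Pd: "\<And>s a. is_distribution (P s a)"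
  shows "(\<Sum>s'\<in>UNIV. \<bar>\<Sum>s1\<in>UNIV. e s1 * Mx P x s1 s'\<bar>) \<le> (\<Sum>s1\<in>UNIV. \<bar>e s1\<bar> * (\<Sum>a\<in>UNIV. \<bar>x s1 a\<bar>))"
proof -
  have P0: "P s a s' \<ge> 0" and P1: "(\<Sum>s'\<in>UNIV. P s a s') = 1" for s a s'
    using Pd[of s a] by (auto simp: is_distribution_def)
  have "(\<Sum>s'\<in>UNIV. \<bar>\<Sum>s1\<in>UNIV. e s1 * Mx P x s1 s'\<bar>) \<le> (\<Sum>s'\<in>UNIV. \<Sum>s1\<in>UNIV. \<Sum>a\<in>UNIV. \<bar>e s1\<bar> * \<bar>x s1 a\<bar> * P s1 a s')"
  proof (rule sum_mono)
    fix s'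
    have "\<bar>\<Sum>s1\<in>UNIV. e s1 * Mx P x s1 s'\<bar> \<le> (\<Sum>s1\<in>UNIV. \<bar>e s1 * Mx P x s1 s'\<bar>)" by (rule sum_abs)
    also have "\<dots> \<le> (\<Sum>s1\<in>UNIV. \<Sum>a\<in>UNIV. \<bar>e s1\<bar> * \<bar>x s1 a\<bar> * P s1 a s')"
    proof (rule sum_mono)
      fix s1
      have "\<bar>e s1 * Mx P x s1 s'\<bar> = \<bar>e s1\<bar> * \<bar>\<Sum>a\<in>UNIV. x s1 a * P s1 a s'\<bar>" by (simp add: Mx_def abs_mult)
      also have "\<dots> \<le> \<bar>e s1\<bar> * (\<Sum>a\<in>UNIV. \<bar>x s1 a\<bar> * P s1 a s')"
        by (rule mult_left_mono, rule order_trans[OF sum_abs], auto simp: abs_mult P0 intro!: sum_mono)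
      finally show "\<bar>e s1 * Mx P x s1 s'\<bar> \<le> (\<Sum>a\<in>UNIV. \<bar>e s1\<bar> * \<bar>x s1 a\<bar> * P s1 a s')"
        by (simp add: sum_distrib_left mult.assoc)
    qed
    finally show "\<bar>\<Sum>s1\<in>UNIV. e s1 * Mx P x s1 s'\<bar> \<le> (\<Sum>s1\<in>UNIV. \<Sum>a\<in>UNIV. \<bar>e s1\<bar> * \<bar>x s1 a\<bar> * P s1 a s')" .
  qed
  also have "\<dots> = (\<Sum>s1\<in>UNIV. \<Sum>a\<in>UNIV. \<bar>e s1\<bar> * \<bar>x s1 a\<bar> * (\<Sum>s'\<in>UNIV. P s1 a s'))"
    by (subst sum.swap, rule sum.cong[OF refl], subst sum.swap, simp add: sum_distrib_left)
  also have "\<dots> = (\<Sum>s1\<in>UNIV. \<bar>e s1\<bar> * (\<Sum>a\<in>UNIV. \<bar>x s1 a\<bar>))"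
    by (simp add: P1 sum_distrib_left)
  finally show ?thesis .
qed

lemma l1bound:
  fixes P :: "'s::finite \<Rightarrow> 'a::finite \<Rightarrow> 's \<Rightarrow> real"
  assumes Pd: "\<And>s a. is_distribution (P s a)" and B: "\<And>s. (\<Sum>a\<in>UNIV. \<bar>x s a\<bar>) \<le> B"
  shows "(\<Sum>s'\<in>UNIV. \<bar>state_dist P x q h s'\<bar>) \<le> B ^ h * (\<Sum>s\<in>UNIV. \<bar>q s\<bar>)"
proof (induction h)
  case 0 then show ?case by simp
next
  case (Suc h)
  have B0: "B \<ge> 0" using B[of undefined] order_trans[OF sum_nonneg] by (metis abs_ge_zero)
  have "(\<Sum>s'\<in>UNIV. \<bar>state_dist P x q (Suc h) s'\<bar>) \<le> (\<Sum>s1\<in>UNIV. \<bar>state_dist P x q h s1\<bar> * (\<Sum>a\<in>UNIV. \<bar>x s1 a\<bar>))"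
    unfolding sd_Suc by (rule core[OF Pd])
  also have "\<dots> \<le> (\<Sum>s1\<in>UNIV. \<bar>state_dist P x q h s1\<bar> * B)"
    by (intro sum_mono mult_left_mono B) auto
  also have "\<dots> = B * (\<Sum>s1\<in>UNIV. \<bar>state_dist P x q h s1\<bar>)" by (metis sum_distrib_right mult.commute)
  also have "\<dots> \<le> B * (B ^ h * (\<Sum>s\<in>UNIV. \<bar>q s\<bar>))" using Suc B0 by (intro mult_left_mono) auto
  finally show ?case by simp
qed

lemma sd_summable:
  fixes P :: "'s::finite \<Rightarrow> 'a::finite \<Rightarrow> 's \<Rightarrow> real"
  assumes Pd: "\<And>s a. is_distribution (P s a)" and B: "\<And>s. (\<Sum>a\<in>UNIV. \<bar>x s a\<bar>) \<le> B"
    and g0: "0 \<le> g" and gB: "g * B < 1"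
  shows "summable (\<lambda>h. g ^ h * state_dist P x q h s')"
proof (rule summable_comparison_test)
  have B0: "B \<ge> 0" using B[of undefined] order_trans[OF sum_nonneg] by (metis abs_ge_zero)
  let ?C = "(\<Sum>s\<in>UNIV. \<bar>q s\<bar>)"
  show "\<exists>N. \<forall>n\<ge>N. norm (g ^ n * state_dist P x q n s') \<le> (g * B) ^ n * ?C"
  proof (intro exI allI impI)
    fix n :: nat
    have "\<bar>state_dist P x q n s'\<bar> \<le> (\<Sum>s'\<in>UNIV. \<bar>state_dist P x q n s'\<bar>)"
      by (rule member_le_sum) auto
    also have "\<dots> \<le> B ^ n * ?C" by (rule l1bound[OF Pd B])
    finally have "g ^ n * \<bar>state_dist P x q n s'\<bar> \<le> g ^ n * (B ^ n * ?C)"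
      using g0 by (intro mult_left_mono) auto
    then show "norm (g ^ n * state_dist P x q n s') \<le> (g * B) ^ n * ?C"
      using g0 by (simp add: abs_mult power_mult_distrib mult.assoc)
  qed
  show "summable (\<lambda>n. (g * B) ^ n * ?C)"
    using g0 B0 gB by (intro summable_mult2 summable_geometric) auto
qed

lemma occ_fix:
  fixes P :: "'s::finite \<Rightarrow> 'a::finite \<Rightarrow> 's \<Rightarrow> real"
  assumes Pd: "\<And>s a. is_distribution (P s a)" and B: "\<And>s. (\<Sum>a\<in>UNIV. \<bar>x s a\<bar>) \<le> B"
    and g0: "0 \<le> g" and gB: "g * B < 1"
  shows "occ P x q g s' = q s' + g * (\<Sum>s1\<in>UNIV. occ P x q g s1 * Mx P x s1 s')"
proof -
  note sm = sd_summable[OF Pd B g0 gB]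
  have h: "(\<Sum>n. g ^ Suc n * state_dist P x q (Suc n) s') = occ P x q g s' - g ^ 0 * state_dist P x q 0 s'"
    unfolding occ_def by (rule suminf_split_head[OF sm])
  have "occ P x q g s' = g ^ 0 * state_dist P x q 0 s' + (\<Sum>n. g ^ Suc n * state_dist P x q (Suc n) s')"
    by (simp only: h)
  also have "(\<lambda>n. g ^ Suc n * state_dist P x q (Suc n) s') = (\<lambda>n. g * (\<Sum>s1\<in>UNIV. (g ^ n * state_dist P x q n s1) * Mx P x s1 s'))"
    by (simp del: state_dist.simps add: sd_Suc sum_distrib_left mult.assoc)
  also have "(\<Sum>n. g * (\<Sum>s1\<in>UNIV. (g ^ n * state_dist P x q n s1) * Mx P x s1 s')) = g * (\<Sum>n. (\<Sum>s1\<in>UNIV. (g ^ n * state_dist P x q n s1) * Mx P x s1 s'))"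
    by (rule suminf_mult, intro summable_sum summable_mult2 sm)
  also have "(\<Sum>n. (\<Sum>s1\<in>UNIV. (g ^ n * state_dist P x q n s1) * Mx P x s1 s')) = (\<Sum>s1\<in>UNIV. \<Sum>n. (g ^ n * state_dist P x q n s1) * Mx P x s1 s')"
    by (rule suminf_sum, intro summable_mult2 sm)
  also have "\<dots> = (\<Sum>s1\<in>UNIV. occ P x q g s1 * Mx P x s1 s')"
    unfolding occ_def by (intro sum.cong refl suminf_mult2[symmetric] sm)
  finally show ?thesis by simp
qed

lemma V_occ:
  fixes P :: "'s::finite \<Rightarrow> 'a::finite \<Rightarrow> 's \<Rightarrow> real"
  assumes Pd: "\<And>s a. is_distribution (P s a)" and B: "\<And>s. (\<Sum>a\<in>UNIV. \<bar>x s a\<bar>) \<le> B"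
    and g0: "0 \<le> g" and gB: "g * B < 1"
  shows "V P R g q x = - (\<Sum>s\<in>UNIV. occ P x q g s * (\<Sum>a\<in>UNIV. x s a * R s a))"
proof -
  note sm = sd_summable[OF Pd B g0 gB]
  have "(\<lambda>h. g ^ h * (\<Sum>s\<in>UNIV. \<Sum>a\<in>UNIV. state_dist P x q h s * x s a * R s a)) =
        (\<lambda>h. \<Sum>s\<in>UNIV. (g ^ h * state_dist P x q h s) * (\<Sum>a\<in>UNIV. x s a * R s a))"
    by (simp add: sum_distrib_left mult.assoc)
  then have "V P R g q x = - (\<Sum>h. \<Sum>s\<in>UNIV. (g ^ h * state_dist P x q h s) * (\<Sum>a\<in>UNIV. x s a * R s a))"
    by (simp add: V_def)
  also have "(\<Sum>h. \<Sum>s\<in>UNIV. (g ^ h * state_dist P x q h s) * (\<Sum>a\<in>UNIV. x s a * R s a)) = (\<Sum>s\<in>UNIV. \<Sum>h. (g ^ h * state_dist P x q h s) * (\<Sum>a\<in>UNIV. x s a * R s a))"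
    by (rule suminf_sum, intro summable_mult2 sm)
  also have "\<dots> = (\<Sum>s\<in>UNIV. occ P x q g s * (\<Sum>a\<in>UNIV. x s a * R s a))"
    unfolding occ_def by (intro sum.cong refl suminf_mult2[symmetric] sm)
  finally show ?thesis .
qed

lemma Mx_diff: "Mx P (\<lambda>s a. x s a - x' s a) s1 s' = Mx P x s1 s' - Mx P x' s1 s'"
  by (simp add: Mx_def sum_subtractf left_diff_distrib)

lemma diff_bound:
  fixes P :: "'s::finite \<Rightarrow> 'a::finite \<Rightarrow> 's \<Rightarrow> real"
  assumes Pd: "\<And>s a. is_distribution (P s a)" and B: "\<And>s. (\<Sum>a\<in>UNIV. \<bar>x s a\<bar>) \<le> B"
    and g0: "0 \<le> g"
    and y: "\<And>s'. y s' = q s' + g * (\<Sum>s1\<in>UNIV. y s1 * Mx P x s1 s')"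
    and y': "\<And>s'. y' s' = q s' + g * (\<Sum>s1\<in>UNIV. y' s1 * Mx P x' s1 s')"
  shows "(\<Sum>s\<in>UNIV. \<bar>y s - y' s\<bar>) \<le> g * B * (\<Sum>s\<in>UNIV. \<bar>y s - y' s\<bar>)
           + g * (\<Sum>s\<in>UNIV. \<bar>y' s\<bar> * (\<Sum>a\<in>UNIV. \<bar>x s a - x' s a\<bar>))"
proof -
  have e: "y s' - y' s' = g * (\<Sum>s1\<in>UNIV. (y s1 - y' s1) * Mx P x s1 s') + g * (\<Sum>s1\<in>UNIV. y' s1 * Mx P (\<lambda>s a. x s a - x' s a) s1 s')" for s'
  proof -
    have 1: "(\<Sum>s1\<in>UNIV. (y s1 - y' s1) * Mx P x s1 s') + (\<Sum>s1\<in>UNIV. y' s1 * (Mx P x s1 s' - Mx P x' s1 s'))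
       = (\<Sum>s1\<in>UNIV. y s1 * Mx P x s1 s') - (\<Sum>s1\<in>UNIV. y' s1 * Mx P x' s1 s')"
      by (simp add: left_diff_distrib right_diff_distrib sum_subtractf)
    have "y s' - y' s' = g * ((\<Sum>s1\<in>UNIV. y s1 * Mx P x s1 s') - (\<Sum>s1\<in>UNIV. y' s1 * Mx P x' s1 s'))"
    proof -
      have "y s' - y' s' = (q s' + g * (\<Sum>s1\<in>UNIV. y s1 * Mx P x s1 s')) - (q s' + g * (\<Sum>s1\<in>UNIV. y' s1 * Mx P x' s1 s'))"
        using y[of s'] y'[of s'] by linarith
      then show ?thesis by (simp add: right_diff_distrib)
    qed
    also have "\<dots> = g * ((\<Sum>s1\<in>UNIV. (y s1 - y' s1) * Mx P x s1 s') + (\<Sum>s1\<in>UNIV. y' s1 * (Mx P x s1 s' - Mx P x' s1 s')))"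
      by (simp only: 1)
    finally show ?thesis by (simp add: Mx_diff distrib_left)
  qed
  have "(\<Sum>s\<in>UNIV. \<bar>y s - y' s\<bar>) \<le> (\<Sum>s'\<in>UNIV. g * \<bar>\<Sum>s1\<in>UNIV. (y s1 - y' s1) * Mx P x s1 s'\<bar> + g * \<bar>\<Sum>s1\<in>UNIV. y' s1 * Mx P (\<lambda>s a. x s a - x' s a) s1 s'\<bar>)"
    apply (rule sum_mono) apply (subst e) using g0 by (intro order_trans[OF abs_triangle_ineq]) (simp add: abs_mult)
  also have "\<dots> = g * (\<Sum>s'\<in>UNIV. \<bar>\<Sum>s1\<in>UNIV. (y s1 - y' s1) * Mx P x s1 s'\<bar>) + g * (\<Sum>s'\<in>UNIV. \<bar>\<Sum>s1\<in>UNIV. y' s1 * Mx P (\<lambda>s a. x s a - x' s a) s1 s'\<bar>)"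
    by (simp add: sum.distrib sum_distrib_left)
  also have "\<dots> \<le> g * (\<Sum>s1\<in>UNIV. \<bar>y s1 - y' s1\<bar> * (\<Sum>a\<in>UNIV. \<bar>x s1 a\<bar>)) + g * (\<Sum>s1\<in>UNIV. \<bar>y' s1\<bar> * (\<Sum>a\<in>UNIV. \<bar>x s1 a - x' s1 a\<bar>))"
    using g0 by (intro add_mono mult_left_mono core[OF Pd]) auto
  also have "\<dots> \<le> g * (\<Sum>s1\<in>UNIV. \<bar>y s1 - y' s1\<bar> * B) + g * (\<Sum>s1\<in>UNIV. \<bar>y' s1\<bar> * (\<Sum>a\<in>UNIV. \<bar>x s1 a - x' s1 a\<bar>))"
    using g0 by (intro add_mono mult_left_mono sum_mono B order_refl) auto
  also have "(\<Sum>s1\<in>UNIV. \<bar>y s1 - y' s1\<bar> * B) = B * (\<Sum>s1\<in>UNIV. \<bar>y s1 - y' s1\<bar>)"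
    by (metis sum_distrib_right mult.commute)
  finally show ?thesis by (simp add: mult.assoc)
qed


lemma pol_abs: "is_policy pol \<Longrightarrow> (\<Sum>a\<in>UNIV. \<bar>pol s a\<bar>) = 1"
  by (simp add: is_policy_def is_distribution_def)

lemma Mx_sum:
  fixes P :: "'s::finite \<Rightarrow> 'a::finite \<Rightarrow> 's \<Rightarrow> real"
  assumes Pd: "\<And>s a. is_distribution (P s a)" and pol: "is_policy pol"
  shows "(\<Sum>s'\<in>UNIV. Mx P pol s1 s') = 1"
proof -
  have "(\<Sum>s'\<in>UNIV. Mx P pol s1 s') = (\<Sum>a\<in>UNIV. pol s1 a * (\<Sum>s'\<in>UNIV. P s1 a s'))"
    unfolding Mx_def by (subst sum.swap) (simp add: sum_distrib_left)
  also have "\<dots> = 1" using Pd pol by (simp add: is_distribution_def is_policy_def)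
  finally show ?thesis .
qed

lemma sd_nonneg:
  assumes Pd: "\<And>s a. is_distribution (P s a)" and pol: "is_policy pol" and q: "\<And>s. q s \<ge> 0"
  shows "state_dist P pol q h s' \<ge> 0"
proof (induction h arbitrary: s')
  case 0 then show ?case using q by simp
next
  case (Suc h)
  have "P s a s' \<ge> 0" "pol s a \<ge> 0" for s a s'
    using Pd pol by (auto simp: is_distribution_def is_policy_def)
  then show ?case using Suc by (auto intro!: sum_nonneg)
qed

lemma occ_nonneg:
  fixes P :: "'s::finite \<Rightarrow> 'a::finite \<Rightarrow> 's \<Rightarrow> real"
  assumes Pd: "\<And>s a. is_distribution (P s a)" and pol: "is_policy pol" and q: "\<And>s. q s \<ge> 0"
    and g0: "0 \<le> g" and g1: "g < 1"
  shows "occ P pol q g s' \<ge> 0"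
  unfolding occ_def
  by (rule suminf_nonneg, rule sd_summable[OF Pd pol_abs[OF pol, THEN eq_refl] g0], use g1 in simp)
     (use sd_nonneg[OF Pd pol q] g0 in simp)

lemma occ_sum:
  fixes P :: "'s::finite \<Rightarrow> 'a::finite \<Rightarrow> 's \<Rightarrow> real"
  assumes Pd: "\<And>s a. is_distribution (P s a)" and pol: "is_policy pol" and q: "is_distribution q"
    and g0: "0 \<le> g" and g1: "g < 1"
  shows "(\<Sum>s\<in>UNIV. occ P pol q g s) = 1 / (1 - g)"
proof -
  note fx = occ_fix[OF Pd pol_abs[OF pol, THEN eq_refl] g0, simplified, OF g1]
  have "(\<Sum>s'\<in>UNIV. occ P pol q g s') = (\<Sum>s'\<in>UNIV. q s') + g * (\<Sum>s'\<in>UNIV. \<Sum>s1\<in>UNIV. occ P pol q g s1 * Mx P pol s1 s')"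
    by (subst fx) (simp add: sum.distrib sum_distrib_left)
  also have "(\<Sum>s'\<in>UNIV. \<Sum>s1\<in>UNIV. occ P pol q g s1 * Mx P pol s1 s') = (\<Sum>s1\<in>UNIV. occ P pol q g s1 * (\<Sum>s'\<in>UNIV. Mx P pol s1 s'))"
    by (subst sum.swap) (simp add: sum_distrib_left)
  also have "\<dots> = (\<Sum>s1\<in>UNIV. occ P pol q g s1)" by (simp add: Mx_sum[OF Pd pol])
  finally have "(\<Sum>s'\<in>UNIV. occ P pol q g s') = 1 + g * (\<Sum>s1\<in>UNIV. occ P pol q g s1)"
    using q by (simp add: is_distribution_def)
  then have "(1 - g) * (\<Sum>s'\<in>UNIV. occ P pol q g s') = 1" by (simp add: algebra_simps)
  then show ?thesis using g1 by (simp add: field_simps)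
qed


lemma gradV_formula:
  fixes P :: "'s::finite \<Rightarrow> 'a::finite \<Rightarrow> 's \<Rightarrow> real"
  assumes Pd: "\<And>s a. is_distribution (P s a)" and pol: "is_policy pol"
    and g0: "0 \<le> g" and g1: "g < 1"
  shows "gradV P R g p pol s a = - occ P pol p g s * (R s a + g * (\<Sum>s1\<in>UNIV. occ P pol (P s a) g s1 * (\<Sum>a1\<in>UNIV. pol s1 a1 * R s1 a1)))"
proof -
  define \<mu> where "\<mu> = occ P pol p g"
  define w where "w = occ P pol (P s a) g"
  define c where "c = w s"
  define m where "m = \<mu> s"
  define r where "r = (\<lambda>s1. \<Sum>a1\<in>UNIV. pol s1 a1 * R s1 a1)"
  define J where "J = (\<Sum>s1\<in>UNIV. w s1 * r s1)"
  define C0 where "C0 = (\<Sum>s1\<in>UNIV. \<mu> s1 * r s1)"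
  define xt where "xt = (\<lambda>t. pol(s := (pol s)(a := pol s a + t)))"
  define \<delta> where "\<delta> = (1 - g) / 2"
  define k where "k = (\<lambda>t. m / (1 - g * t * c))"
  define y where "y = (\<lambda>t s'. \<mu> s' + g * t * k t * w s')"
  define G where "G = (\<lambda>t. - C0 - t * (m / (1 - g * t * c)) * (g * J + R s a))"
  have B1: "\<And>s. (\<Sum>a\<in>UNIV. \<bar>pol s a\<bar>) \<le> 1" using pol_abs[OF pol] by simp
  have g1': "g * 1 < 1" using g1 by simp
  have fx\<mu>: "\<mu> s' = p s' + g * (\<Sum>s1\<in>UNIV. \<mu> s1 * Mx P pol s1 s')" for s'
    unfolding \<mu>_def by (rule occ_fix[OF Pd B1 g0 g1'])
  have fxw: "w s' = P s a s' + g * (\<Sum>s1\<in>UNIV. w s1 * Mx P pol s1 s')" for s'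
    unfolding w_def by (rule occ_fix[OF Pd B1 g0 g1'])
  have Psa: "is_distribution (P s a)" by (rule Pd)
  have w0: "w s' \<ge> 0" for s'
    unfolding w_def by (rule occ_nonneg[OF Pd pol _ g0 g1]) (use Psa in \<open>simp add: is_distribution_def\<close>)
  have wsum: "(\<Sum>s\<in>UNIV. w s) = 1 / (1 - g)"
    unfolding w_def by (rule occ_sum[OF Pd pol Psa g0 g1])
  have c0: "c \<ge> 0" unfolding c_def by (rule w0)
  have c1: "c \<le> 1 / (1 - g)" unfolding c_def wsum[symmetric]
    by (rule member_le_sum) (auto intro: w0)
  have \<delta>0: "\<delta> > 0" using g1 by (simp add: \<delta>_def)
  have xt_eq: "xt t s1 a1 = pol s1 a1 + (if s1 = s \<and> a1 = a then t else 0)" for t s1 a1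
    by (auto simp: xt_def)
  have Mxt: "Mx P (xt t) s1 s' = Mx P pol s1 s' + (if s1 = s then t * P s a s' else 0)" for t s1 s'
  proof -
    have "Mx P (xt t) s1 s' = Mx P pol s1 s' + (\<Sum>a1\<in>UNIV. (if s1 = s \<and> a1 = a then t else 0) * P s1 a1 s')"
      by (simp add: Mx_def xt_eq distrib_right sum.distrib)
    also have "(\<Sum>a1\<in>UNIV. (if s1 = s \<and> a1 = a then t else 0) * P s1 a1 s') = (if s1 = s then t * P s a s' else 0)"
      by (cases "s1 = s") (simp_all add: if_distrib[of "\<lambda>z. z * _"] cong: if_cong)
    finally show ?thesis .
  qed
  have Bt: "(\<Sum>a1\<in>UNIV. \<bar>xt t s1 a1\<bar>) \<le> 1 + \<bar>t\<bar>" for t s1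
  proof -
    have "(\<Sum>a1\<in>UNIV. \<bar>xt t s1 a1\<bar>) \<le> (\<Sum>a1\<in>UNIV. \<bar>pol s1 a1\<bar> + \<bar>if s1 = s \<and> a1 = a then t else 0\<bar>)"
      unfolding xt_eq by (intro sum_mono abs_triangle_ineq)
    also have "\<dots> = 1 + (\<Sum>a1\<in>UNIV. \<bar>if s1 = s \<and> a1 = a then t else 0\<bar>)"
      by (simp add: sum.distrib pol_abs[OF pol])
    also have "(\<Sum>a1\<in>UNIV. \<bar>if s1 = s \<and> a1 = a then t else 0\<bar>) = (if s1 = s then \<bar>t\<bar> else 0)"
      by (cases "s1 = s") (simp_all add: if_distrib[of abs] cong: if_cong)
    finally show ?thesis by (auto split: if_splits)
  qed
  have eqG: "V P R g p (xt t) = G t" if t: "t \<in> ball 0 \<delta>" for t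
  proof -
    have ta: "\<bar>t\<bar> < \<delta>" using t by (simp add: dist_norm)
    have gB: "g * (1 + \<bar>t\<bar>) < 1"
    proof -
      have "g * (1 + \<bar>t\<bar>) \<le> g * (1 + \<delta>)" using ta g0 by (intro mult_left_mono) auto
      also have "\<dots> < 1" proof -
        have "0 < (1 - g) * (2 - g)" using g1 by (intro mult_pos_pos) auto
        then have "g * 3 < g * g + 2" by (simp add: algebra_simps)
        then show ?thesis by (simp add: \<delta>_def field_simps)
      qed
      finally show ?thesis .
    qed
    have tc: "\<bar>t\<bar> * c \<le> \<delta> * (1 / (1 - g))" using ta c0 c1 by (intro mult_mono) auto
    also have "\<delta> * (1 / (1 - g)) = 1 / 2" using g1 by (simp add: \<delta>_def)
    finally have "g * (\<bar>t\<bar> * c) \<le> g * (1/2)" using g0 by (intro mult_left_mono)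
    moreover have "t * c \<le> \<bar>t\<bar> * c" using c0 by (intro mult_right_mono) auto
    then have "g * (t * c) \<le> g * (\<bar>t\<bar> * c)" using g0 by (rule mult_left_mono)
    ultimately have "g * (t * c) < 1" using g1 by linarith
    then have "g * t * c < 1" by (simp add: mult.assoc)
    then have den: "1 - g * t * c > 0" by simp
    have kk: "k t * (1 - g * t * c) = m" using den by (simp add: k_def)
    have ys: "y t s = k t"
    proof -
      have "y t s = m + g * t * k t * c" by (simp add: y_def m_def c_def)
      also have "\<dots> = k t" using kk by (simp add: algebra_simps)
      finally show ?thesis .
    qed
    have yfix: "y t s' = p s' + g * (\<Sum>s1\<in>UNIV. y t s1 * Mx P (xt t) s1 s')" for s'
    proof -
      have "(\<Sum>s1\<in>UNIV. y t s1 * Mx P (xt t) s1 s') = (\<Sum>s1\<in>UNIV. y t s1 * Mx P pol s1 s') + y t s * (t * P s a s')"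
        by (simp add: Mxt distrib_left sum.distrib if_distrib[of "\<lambda>z. _ * z"] cong: if_cong)
      also have "(\<Sum>s1\<in>UNIV. y t s1 * Mx P pol s1 s') = (\<Sum>s1\<in>UNIV. \<mu> s1 * Mx P pol s1 s') + g * t * k t * (\<Sum>s1\<in>UNIV. w s1 * Mx P pol s1 s')"
        by (simp add: y_def distrib_right sum.distrib sum_distrib_left mult.assoc)
      finally have "g * (\<Sum>s1\<in>UNIV. y t s1 * Mx P (xt t) s1 s') = g * (\<Sum>s1\<in>UNIV. \<mu> s1 * Mx P pol s1 s') + g * t * k t * (g * (\<Sum>s1\<in>UNIV. w s1 * Mx P pol s1 s')) + g * t * k t * P s a s'"
        by (simp add: ys algebra_simps)
      also have "\<dots> = (\<mu> s' - p s') + g * t * k t * (w s' - P s a s') + g * t * k t * P s a s'"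
        using fx\<mu>[of s'] fxw[of s'] by simp
      finally show ?thesis by (simp add: y_def algebra_simps)
    qed
    have occfix: "occ P (xt t) p g s' = p s' + g * (\<Sum>s1\<in>UNIV. occ P (xt t) p g s1 * Mx P (xt t) s1 s')" for s'
      by (rule occ_fix[OF Pd Bt g0 gB])
    note db = diff_bound[OF Pd Bt g0 occfix yfix]
    then have "(\<Sum>s\<in>UNIV. \<bar>occ P (xt t) p g s - y t s\<bar>) \<le> g * (1 + \<bar>t\<bar>) * (\<Sum>s\<in>UNIV. \<bar>occ P (xt t) p g s - y t s\<bar>)"
      by simp
    then have "(1 - g * (1 + \<bar>t\<bar>)) * (\<Sum>s\<in>UNIV. \<bar>occ P (xt t) p g s - y t s\<bar>) \<le> 0"
      by (simp add: algebra_simps)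
    moreover have "(\<Sum>s\<in>UNIV. \<bar>occ P (xt t) p g s - y t s\<bar>) \<ge> 0" by (intro sum_nonneg) auto
    ultimately have "(\<Sum>s\<in>UNIV. \<bar>occ P (xt t) p g s - y t s\<bar>) = 0" using gB
      by (smt (verit) mult_pos_pos)
    then have occy: "occ P (xt t) p g s1 = y t s1" for s1
      using sum_nonneg_eq_0_iff[of UNIV "\<lambda>s. \<bar>occ P (xt t) p g s - y t s\<bar>"] by auto
    have rt: "(\<Sum>a1\<in>UNIV. xt t s1 a1 * R s1 a1) = r s1 + (if s1 = s then t * R s a else 0)" for s1
    proof -
      have "(\<Sum>a1\<in>UNIV. xt t s1 a1 * R s1 a1) = r s1 + (\<Sum>a1\<in>UNIV. (if s1 = s \<and> a1 = a then t else 0) * R s1 a1)"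
        by (simp add: r_def xt_eq distrib_right sum.distrib)
      also have "(\<Sum>a1\<in>UNIV. (if s1 = s \<and> a1 = a then t else 0) * R s1 a1) = (if s1 = s then t * R s a else 0)"
        by (cases "s1 = s") (simp_all add: if_distrib[of "\<lambda>z. z * _"] cong: if_cong)
      finally show ?thesis .
    qed
    have "V P R g p (xt t) = - (\<Sum>s1\<in>UNIV. y t s1 * (r s1 + (if s1 = s then t * R s a else 0)))"
      by (simp add: V_occ[OF Pd Bt g0 gB] occy rt)
    also have "(\<Sum>s1\<in>UNIV. y t s1 * (r s1 + (if s1 = s then t * R s a else 0))) = (\<Sum>s1\<in>UNIV. y t s1 * r s1) + y t s * (t * R s a)"
      by (simp add: distrib_left sum.distrib if_distrib[of "\<lambda>z. _ * z"] cong: if_cong)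
    also have "(\<Sum>s1\<in>UNIV. y t s1 * r s1) = C0 + g * t * k t * J"
      by (simp add: y_def C0_def J_def distrib_right sum.distrib sum_distrib_left mult.assoc)
    finally have "V P R g p (xt t) = - (C0 + g * t * k t * J + y t s * (t * R s a))" .
    moreover have "G t = - C0 - t * k t * (g * J + R s a)" by (simp add: G_def k_def)
    ultimately show ?thesis by (simp add: ys algebra_simps)
  qed
  have dG: "(G has_real_derivative (- (m * (g * J + R s a)))) (at 0)"
    unfolding G_def by (auto intro!: derivative_eq_intros)
  have "((\<lambda>t. V P R g p (xt t)) has_real_derivative (- (m * (g * J + R s a)))) (at 0)"
  proof (rule has_field_derivative_transform_within_open[OF dG open_ball[of 0 \<delta>]])
    show "0 \<in> ball 0 \<delta>" using \<delta>0 by simp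
    show "G x = V P R g p (xt x)" if "x \<in> ball 0 \<delta>" for x using eqG[OF that] by simp
  qed
  then have "gradV P R g p pol s a = - (m * (g * J + R s a))"
    unfolding gradV_def xt_def by (rule DERIV_imp_deriv)
  then show ?thesis by (simp add: m_def \<mu>_def J_def w_def r_def algebra_simps)
qed


lemma occ_diff:
  fixes P :: "'s::finite \<Rightarrow> 'a::finite \<Rightarrow> 's \<Rightarrow> real"
  assumes Pd: "\<And>s a. is_distribution (P s a)" and pol: "is_policy pol" and pol': "is_policy pol'"
    and q: "is_distribution q" and g0: "0 \<le> g" and g1: "g < 1"
    and mD: "\<And>s. (\<Sum>a\<in>UNIV. \<bar>pol s a - pol' s a\<bar>) \<le> m"
  shows "(\<Sum>s\<in>UNIV. \<bar>occ P pol q g s - occ P pol' q g s\<bar>) \<le> g * m / (1 - g) ^ 2"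
proof -
  have B1: "\<And>s. (\<Sum>a\<in>UNIV. \<bar>pol s a\<bar>) \<le> 1" using pol_abs[OF pol] by simp
  have B1': "\<And>s. (\<Sum>a\<in>UNIV. \<bar>pol' s a\<bar>) \<le> 1" using pol_abs[OF pol'] by simp
  have g1': "g * 1 < 1" using g1 by simp
  have q0: "\<And>s. q s \<ge> 0" using q by (simp add: is_distribution_def)
  let ?E = "(\<Sum>s\<in>UNIV. \<bar>occ P pol q g s - occ P pol' q g s\<bar>)"
  have db: "?E \<le> g * 1 * ?E + g * (\<Sum>s\<in>UNIV. \<bar>occ P pol' q g s\<bar> * (\<Sum>a\<in>UNIV. \<bar>pol s a - pol' s a\<bar>))"
    by (rule diff_bound[OF Pd B1 g0 occ_fix[OF Pd B1 g0 g1'] occ_fix[OF Pd B1' g0 g1']])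
  have "(\<Sum>s\<in>UNIV. \<bar>occ P pol' q g s\<bar> * (\<Sum>a\<in>UNIV. \<bar>pol s a - pol' s a\<bar>)) \<le> (\<Sum>s\<in>UNIV. occ P pol' q g s * m)"
    using occ_nonneg[OF Pd pol' q0 g0 g1] by (intro sum_mono) (simp add: mD mult_left_mono)
  also have "\<dots> = m / (1 - g)" by (simp add: sum_distrib_right[symmetric] occ_sum[OF Pd pol' q g0 g1])
  finally have "(\<Sum>s\<in>UNIV. \<bar>occ P pol' q g s\<bar> * (\<Sum>a\<in>UNIV. \<bar>pol s a - pol' s a\<bar>)) \<le> m / (1 - g)" .
  then have "g * (\<Sum>s\<in>UNIV. \<bar>occ P pol' q g s\<bar> * (\<Sum>a\<in>UNIV. \<bar>pol s a - pol' s a\<bar>)) \<le> g * (m / (1 - g))"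
    using g0 by (rule mult_left_mono)
  then have "?E \<le> g * ?E + g * (m / (1 - g))"
    using db by linarith
  then have "(1 - g) * ?E \<le> g * (m / (1 - g))" by (simp add: algebra_simps)
  then have "?E \<le> g * (m / (1 - g)) / (1 - g)" using g1 by (subst pos_le_divide_eq) (auto simp: mult.commute)
  moreover have "g * (m / (1 - g)) / (1 - g) = g * m / (1 - g) ^ 2" by (simp add: power2_eq_square)
  ultimately show ?thesis by (simp only:)
qed

definition rr :: "('s::finite \<Rightarrow> 'a::finite \<Rightarrow> real) \<Rightarrow> ('s \<Rightarrow> 'a \<Rightarrow> real) \<Rightarrow> 's \<Rightarrow> real" where
  "rr R pol s1 = (\<Sum>a1\<in>UNIV. pol s1 a1 * R s1 a1)"

definition JJ where
  "JJ P R g pol q = (\<Sum>s1\<in>UNIV. occ P pol q g s1 * rr R pol s1)"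

lemma rr_bounds:
  assumes pol: "is_policy pol" and R: "\<And>s a. 0 \<le> R s a \<and> R s a \<le> 1"
  shows "0 \<le> rr R pol s" "rr R pol s \<le> 1"
proof -
  have p0: "pol s a \<ge> 0" for a using pol by (simp add: is_policy_def is_distribution_def)
  show "0 \<le> rr R pol s" unfolding rr_def using p0 R by (intro sum_nonneg) simp
  have "rr R pol s \<le> (\<Sum>a\<in>UNIV. pol s a)" unfolding rr_def
    using p0 R by (intro sum_mono) (simp add: mult_left_le)
  then show "rr R pol s \<le> 1" using pol by (simp add: is_policy_def is_distribution_def)
qed

lemma rr_diff:
  assumes R: "\<And>s a. 0 \<le> R s a \<and> R s a \<le> 1"
  shows "\<bar>rr R pol s - rr R pol' s\<bar> \<le> (\<Sum>a\<in>UNIV. \<bar>pol s a - pol' s a\<bar>)"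
proof -
  have "rr R pol s - rr R pol' s = (\<Sum>a\<in>UNIV. (pol s a - pol' s a) * R s a)"
    by (simp add: rr_def sum_subtractf left_diff_distrib)
  also have "\<bar>\<dots>\<bar> \<le> (\<Sum>a\<in>UNIV. \<bar>(pol s a - pol' s a) * R s a\<bar>)" by (rule sum_abs)
  also have "\<dots> \<le> (\<Sum>a\<in>UNIV. \<bar>pol s a - pol' s a\<bar>)"
    using R by (intro sum_mono) (simp add: abs_mult mult_left_le)
  finally show ?thesis .
qed

lemma JJ_bounds:
  fixes P :: "'s::finite \<Rightarrow> 'a::finite \<Rightarrow> 's \<Rightarrow> real"
  assumes Pd: "\<And>s a. is_distribution (P s a)" and pol: "is_policy pol"
    and q: "is_distribution q" and g0: "0 \<le> g" and g1: "g < 1"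
    and R: "\<And>s a. 0 \<le> R s a \<and> R s a \<le> 1"
  shows "0 \<le> JJ P R g pol q" "JJ P R g pol q \<le> 1 / (1 - g)"
proof -
  have q0: "\<And>s. q s \<ge> 0" using q by (simp add: is_distribution_def)
  note o0 = occ_nonneg[OF Pd pol q0 g0 g1]
  show "0 \<le> JJ P R g pol q" unfolding JJ_def using o0 rr_bounds[OF pol R] by (intro sum_nonneg) simp
  have "JJ P R g pol q \<le> (\<Sum>s1\<in>UNIV. occ P pol q g s1)" unfolding JJ_def
    using o0 rr_bounds[OF pol R] by (intro sum_mono) (simp add: mult_left_le)
  then show "JJ P R g pol q \<le> 1 / (1 - g)" by (simp add: occ_sum[OF Pd pol q g0 g1])
qed

lemma JJ_diff:
  fixes P :: "'s::finite \<Rightarrow> 'a::finite \<Rightarrow> 's \<Rightarrow> real"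
  assumes Pd: "\<And>s a. is_distribution (P s a)" and pol: "is_policy pol" and pol': "is_policy pol'"
    and q: "is_distribution q" and g0: "0 \<le> g" and g1: "g < 1"
    and R: "\<And>s a. 0 \<le> R s a \<and> R s a \<le> 1"
    and mD: "\<And>s. (\<Sum>a\<in>UNIV. \<bar>pol s a - pol' s a\<bar>) \<le> m"
  shows "\<bar>JJ P R g pol q - JJ P R g pol' q\<bar> \<le> m / (1 - g) ^ 2"
proof -
  have q0: "\<And>s. q s \<ge> 0" using q by (simp add: is_distribution_def)
  let ?o = "occ P pol q g" and ?o' = "occ P pol' q g"
  have eq: "JJ P R g pol q - JJ P R g pol' q = (\<Sum>s\<in>UNIV. (?o s - ?o' s) * rr R pol s) + (\<Sum>s\<in>UNIV. ?o' s * (rr R pol s - rr R pol' s))"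
  proof -
    have "(\<Sum>s\<in>UNIV. (?o s - ?o' s) * rr R pol s) + (\<Sum>s\<in>UNIV. ?o' s * (rr R pol s - rr R pol' s))
      = (\<Sum>s\<in>UNIV. ?o s * rr R pol s) - (\<Sum>s\<in>UNIV. ?o' s * rr R pol' s)"
      by (simp add: left_diff_distrib right_diff_distrib sum_subtractf)
    then show ?thesis by (simp add: JJ_def)
  qed
  have "\<bar>(\<Sum>s\<in>UNIV. (?o s - ?o' s) * rr R pol s) + (\<Sum>s\<in>UNIV. ?o' s * (rr R pol s - rr R pol' s))\<bar> \<le> (\<Sum>s\<in>UNIV. \<bar>?o s - ?o' s\<bar>) + (\<Sum>s\<in>UNIV. ?o' s * m)"
  proof (rule order_trans[OF abs_triangle_ineq add_mono])
    show "\<bar>\<Sum>s\<in>UNIV. (?o s - ?o' s) * rr R pol s\<bar> \<le> (\<Sum>s\<in>UNIV. \<bar>?o s - ?o' s\<bar>)"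
      using rr_bounds[OF pol R] by (intro order_trans[OF sum_abs] sum_mono) (simp add: abs_mult mult_left_le)
    show "\<bar>\<Sum>s\<in>UNIV. ?o' s * (rr R pol s - rr R pol' s)\<bar> \<le> (\<Sum>s\<in>UNIV. ?o' s * m)"
    proof (intro order_trans[OF sum_abs] sum_mono)
      fix s
      have "?o' s * \<bar>rr R pol s - rr R pol' s\<bar> \<le> ?o' s * m"
        using occ_nonneg[OF Pd pol' q0 g0 g1] by (intro mult_left_mono order_trans[OF rr_diff[OF R] mD]) auto
      then show "\<bar>?o' s * (rr R pol s - rr R pol' s)\<bar> \<le> ?o' s * m"
        using occ_nonneg[OF Pd pol' q0 g0 g1] by (simp add: abs_mult)
    qed
  qed
  also have "\<dots> \<le> g * m / (1 - g) ^ 2 + m / (1 - g)"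
    by (intro add_mono occ_diff[OF Pd pol pol' q g0 g1 mD])
       (simp add: sum_distrib_right[symmetric] occ_sum[OF Pd pol' q g0 g1])
  also have "\<dots> = m / (1 - g) ^ 2"
  proof -
    have "m / (1 - g) = m * (1 - g) / (1 - g) ^ 2" using g1 by (simp add: power2_eq_square)
    then have "g * m / (1 - g) ^ 2 + m / (1 - g) = (g * m + m * (1 - g)) / (1 - g) ^ 2"
      by (simp add: add_divide_distrib)
    then show ?thesis by (simp add: algebra_simps)
  qed
  finally show ?thesis unfolding eq .
qed


theorem proposition1:
  fixes P :: "'s::finite \<Rightarrow> 'a::finite \<Rightarrow> 's \<Rightarrow> real"
    and R :: "'s \<Rightarrow> 'a \<Rightarrow> real"
    and \<gamma> :: real
    and p :: "'s \<Rightarrow> real"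
    and pol pol' :: "'s \<Rightarrow> 'a \<Rightarrow> real"
  assumes "\<And>s a. is_distribution (P s a)"
    and "\<And>s a. 0 \<le> R s a \<and> R s a \<le> 1"
    and "0 \<le> \<gamma>" and "\<gamma> < 1"
    and "is_distribution p"
    and "is_policy pol" and "is_policy pol'"
  shows "norm2inf (\<lambda>s a. gradV P R \<gamma> p pol s a - gradV P R \<gamma> p pol' s a)
           \<le> 2 * \<gamma> / (1 - \<gamma>) ^ 3 * norm21 (\<lambda>s a. pol s a - pol' s a)"
proof -
  note Pd = assms(1) and R = assms(2) and g0 = assms(3) and g1 = assms(4) and pd = assms(5)
    and pol = assms(6) and pol' = assms(7)
  define D where "D s = (\<Sum>a\<in>UNIV. \<bar>pol s a - pol' s a\<bar>)" for s
  define m where "m = Max (range D)"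
  have mD: "(\<Sum>a\<in>UNIV. \<bar>pol s a - pol' s a\<bar>) \<le> m" for s
    unfolding m_def D_def[symmetric] by (rule Max_ge) auto
  have D0: "D s \<ge> 0" for s unfolding D_def by (rule sum_nonneg) auto
  have m0: "m \<ge> 0" using mD[of undefined] D0[of undefined] unfolding D_def by linarith
  have m_le: "m \<le> norm21 (\<lambda>s a. pol s a - pol' s a)"
  proof -
    have "m \<in> range D" unfolding m_def by (rule Max_in) auto
    then obtain s0 where s0: "m = D s0" by auto
    have "m ^ 2 \<le> (\<Sum>s\<in>UNIV. (D s) ^ 2)" unfolding s0 by (rule member_le_sum) auto
    then have "sqrt (m ^ 2) \<le> sqrt (\<Sum>s\<in>UNIV. (D s) ^ 2)" by (rule real_sqrt_le_mono)
    then show ?thesis using m0 by (simp add: norm21_def D_def)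
  qed
  define \<mu> where "\<mu> = occ P pol p \<gamma>"
  define \<mu>' where "\<mu>' = occ P pol' p \<gamma>"
  define Q where "Q s a = R s a + \<gamma> * JJ P R \<gamma> pol (P s a)" for s a
  define Q' where "Q' s a = R s a + \<gamma> * JJ P R \<gamma> pol' (P s a)" for s a
  have gr: "gradV P R \<gamma> p pol s a = - \<mu> s * Q s a" for s a
    unfolding \<mu>_def Q_def JJ_def rr_def by (rule gradV_formula[OF Pd pol g0 g1])
  have gr': "gradV P R \<gamma> p pol' s a = - \<mu>' s * Q' s a" for s a
    unfolding \<mu>'_def Q'_def JJ_def rr_def by (rule gradV_formula[OF Pd pol' g0 g1])
  have p0: "\<And>s. p s \<ge> 0" using pd by (simp add: is_distribution_def)
  have \<mu>'0: "\<mu>' s \<ge> 0" for s unfolding \<mu>'_def by (rule occ_nonneg[OF Pd pol' p0 g0 g1])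
  have Q0: "0 \<le> Q s a" for s a
    unfolding Q_def using R[of s a] JJ_bounds(1)[OF Pd pol Pd g0 g1 R] g0 by simp
  have Q1: "Q s a \<le> 1 / (1 - \<gamma>)" for s a
  proof -
    have "\<gamma> * JJ P R \<gamma> pol (P s a) \<le> \<gamma> * (1 / (1 - \<gamma>))"
      using JJ_bounds(2)[OF Pd pol Pd g0 g1 R] g0 by (rule mult_left_mono)
    moreover have "1 + \<gamma> * (1 / (1 - \<gamma>)) = 1 / (1 - \<gamma>)" using g1 by (simp add: field_simps)
    ultimately show ?thesis unfolding Q_def using R[of s a] by linarith
  qed
  have Qd: "\<bar>Q s a - Q' s a\<bar> \<le> \<gamma> * (m / (1 - \<gamma>) ^ 2)" for s a
  proof -
    have "\<bar>Q s a - Q' s a\<bar> = \<gamma> * \<bar>JJ P R \<gamma> pol (P s a) - JJ P R \<gamma> pol' (P s a)\<bar>"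
      unfolding Q_def Q'_def using g0 by (simp add: abs_mult right_diff_distrib[symmetric])
    also have "\<dots> \<le> \<gamma> * (m / (1 - \<gamma>) ^ 2)"
      using JJ_diff[OF Pd pol pol' Pd g0 g1 R mD] g0 by (rule mult_left_mono)
    finally show ?thesis .
  qed
  define h where "h s = \<bar>\<mu> s - \<mu>' s\<bar> * (1 / (1 - \<gamma>)) + \<mu>' s * (\<gamma> * (m / (1 - \<gamma>) ^ 2))" for s
  have h0: "h s \<ge> 0" for s unfolding h_def using \<mu>'0[of s] g0 g1 m0 by simp
  have pt: "\<bar>gradV P R \<gamma> p pol s a - gradV P R \<gamma> p pol' s a\<bar> \<le> h s" for s a
  proof -
    have "gradV P R \<gamma> p pol s a - gradV P R \<gamma> p pol' s a = - ((\<mu> s - \<mu>' s) * Q s a + \<mu>' s * (Q s a - Q' s a))"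
      by (simp add: gr gr' algebra_simps)
    then have "\<bar>gradV P R \<gamma> p pol s a - gradV P R \<gamma> p pol' s a\<bar> = \<bar>(\<mu> s - \<mu>' s) * Q s a + \<mu>' s * (Q s a - Q' s a)\<bar>"
      by (simp only: abs_minus_cancel)
    also have "\<dots> \<le> \<bar>(\<mu> s - \<mu>' s) * Q s a\<bar> + \<bar>\<mu>' s * (Q s a - Q' s a)\<bar>" by (rule abs_triangle_ineq)
    also have "\<dots> = \<bar>\<mu> s - \<mu>' s\<bar> * \<bar>Q s a\<bar> + \<mu>' s * \<bar>Q s a - Q' s a\<bar>"
      using \<mu>'0[of s] by (simp add: abs_mult)
    also have "\<dots> \<le> h s" unfolding h_def
      using Q0[of s a] Q1[of s a] Qd[of s a] \<mu>'0[of s]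
      by (intro add_mono mult_left_mono) auto
    finally show ?thesis .
  qed
  have mx: "Max (range (\<lambda>a. \<bar>gradV P R \<gamma> p pol s a - gradV P R \<gamma> p pol' s a\<bar>)) \<le> h s" for s
    using pt by (subst Max_le_iff) auto
  have mx0: "0 \<le> Max (range (\<lambda>a. \<bar>gradV P R \<gamma> p pol s a - gradV P R \<gamma> p pol' s a\<bar>))" for s
    by (rule order_trans[OF abs_ge_zero Max_ge]) auto
  have "norm2inf (\<lambda>s a. gradV P R \<gamma> p pol s a - gradV P R \<gamma> p pol' s a) \<le> sqrt (\<Sum>s\<in>UNIV. (h s) ^ 2)"
    unfolding norm2inf_def using mx mx0
    by (intro real_sqrt_le_mono sum_mono power_mono) auto
  also have "\<dots> = L2_set h UNIV" by (simp add: L2_set_def)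
  also have "\<dots> \<le> (\<Sum>s\<in>UNIV. h s)" by (rule L2_set_le_sum) (use h0 in auto)
  also have "\<dots> = (\<Sum>s\<in>UNIV. \<bar>\<mu> s - \<mu>' s\<bar>) * (1 / (1 - \<gamma>)) + (\<Sum>s\<in>UNIV. \<mu>' s) * (\<gamma> * (m / (1 - \<gamma>) ^ 2))"
    by (simp only: h_def sum.distrib sum_distrib_right)
  also have "\<dots> \<le> (\<gamma> * m / (1 - \<gamma>) ^ 2) * (1 / (1 - \<gamma>)) + (1 / (1 - \<gamma>)) * (\<gamma> * (m / (1 - \<gamma>) ^ 2))"
    using g1 g0 m0 unfolding \<mu>_def \<mu>'_def
    by (intro add_mono mult_right_mono occ_diff[OF Pd pol pol' pd g0 g1 mD])
       (simp_all add: occ_sum[OF Pd pol' pd g0 g1])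
  also have "\<dots> = 2 * \<gamma> / (1 - \<gamma>) ^ 3 * m"
    using g1 by (simp add: field_simps power2_eq_square power3_eq_cube)
  also have "\<dots> \<le> 2 * \<gamma> / (1 - \<gamma>) ^ 3 * norm21 (\<lambda>s a. pol s a - pol' s a)"
    using g0 g1 m_le by (intro mult_left_mono) auto
  finally show ?thesis .
qed

end
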